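(* Let $(\mathcal{X},\mathcal{F})$ be a measurable space, $\bar p$ a probability measure on $\mathcal{X}$, $r:\mathcal{X}\to\mathbb{R}$ a measurable reward function, $M\ge 1$ an integer and $\alpha\in(0,\infty)$. Let $X^{(1)},\dots,X^{(M)}$ be i.i.d. with law $\bar p$, set $R_i:=r(X^{(i)})$, let $\hat P_X:=\frac1M\sum_{i=1}^M\delta_{X^{(i)}}$ be their empirical distribution and $\hat F_R(u):=\frac1M\#\{i: R_i\le u\}$ the empirical CDF of the rewards. Let $A:\mathbb{R}\times[0,1]\times\mathcal{X}\times\mathcal{P}(\mathcal{X})\to[0,1]$ be a measurable acceptance function which is coordinatewise nondecreasing in its first two arguments. Put $p_i:=A(R_i,\hat F_R(R_i),X^{(i)},\hat P_X)$ and let $C_1,\dots,C_M$ be $\{0,1\}$-valued random variables (not necessarily independent of one another) with $\mathbb{P}(C_i=1\mid X^{(1)},\dots,X^{(M)})=p_i$ for each $i$. Let the accepted set be $\mathcal{A}:=\{X^{(i)}: C_i=1\}$ and assume $\mathbb{P}(X^{(1)}\in\mathcal{A})>0$. Define $$g(x):=\mathbb{E}\big[A(r(x),\hat F_R(r(x)),x,\hat P_X)\,\big|\,X^{(1)}=x\big],\qquad \frac{\hat r(x)}{\alpha}:=\log g(x)\in[-\infty,0],$$ where the expectation is over $X^{(2)},\dots,X^{(M)}$ (i.e. over the randomness of $\hat F_R,\hat P_X$ given $X^{(1)}=x$). Then the conditional law of $X^{(1)}$ given $X^{(1)}\in\mathcal{A}$ has density $g/\int g\,d\bar p$ with respect to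 $\bar p$, i.e. it is proportional to $\exp(\hat r(x)/\alpha)\,\bar p(dx)$; equivalently, it is the solution of the KL-regularized (PPO) problem $$\operatorname*{argmax}_{\hat p}\Big[\mathbb{E}_{x\sim\hat p}\,\hat r(x)-\alpha\,\mathsf{KL}(\hat p\,\|\,\bar p)\Big].$$
   Context: $\mathcal{P}(\mathcal{X})$ denotes the set of probability measures on $\mathcal{X}$. For a reward $\rho$ and reference $\bar p$, the maximizer over probability measures $p$ of $\mathbb{E}_{X\sim p}[\rho(X)]-\alpha\mathsf{KL}(p\|\bar p)$ is the measure $p(dx)\propto\exp(\rho(x)/\alpha)\bar p(dx)$. The sampling scheme described (accepting $X^{(i)}$ iff $C_i=1$) is called Generalized Rejection Sampling (GRS). *)

theory Defs
  imports "HOL-Probability.Probability"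
begin

definition empirical_measure :: "'a measure \<Rightarrow> nat \<Rightarrow> (nat \<Rightarrow> 'a) \<Rightarrow> 'a measure" where
  "empirical_measure pbar M xs =
     measure_of (space pbar) (sets pbar)
       (\<lambda>B. ennreal (real (card {i \<in> {1..M}. xs i \<in> B}) / real M))"

definition empirical_cdf :: "('a \<Rightarrow> real) \<Rightarrow> nat \<Rightarrow> (nat \<Rightarrow> 'a) \<Rightarrow> real \<Rightarrow> real" where
  "empirical_cdf r M xs u = real (card {i \<in> {1..M}. r (xs i) \<le> u}) / real M"

text \<open>g(x) = E[ A(r x, F_R(r x), x, P_X) | X1 = x ]: the expectation over the
  i.i.d. samples X2, ..., XM with X1 fixed to x.\<close>
definition accept_g ::
  "'a measure \<Rightarrow> ('a \<Rightarrow> real) \<Rightarrow> nat \<Rightarrow> (real \<Rightarrow> real \<Rightarrow> 'a \<Rightarrow> 'a measure \<Rightarrow> real) \<Rightarrow> 'a \<Rightarrow> real"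
where
  "accept_g pbar r M A x =
     (\<integral>ys. (let xs = (\<lambda>j. if j = 1 then x else ys j) in
              A (r x) (empirical_cdf r M xs (r x)) x (empirical_measure pbar M xs))
      \<partial>(PiM {2..M} (\<lambda>_. pbar)))"

end

theory Submission
  imports Defs
begin

lemma emp_distr:
  assumes M: "M \<ge> 1" and f: "\<And>i. i \<in> {1..M} \<Longrightarrow> f i \<in> space pbar"
  shows "empirical_measure pbar M f = distr (uniform_count_measure {1..M}) pbar f"
proof -
  have fm: "f \<in> measurable (uniform_count_measure {1..M}) pbar"
    using f by (auto simp: measurable_def space_uniform_count_measure sets_uniform_count_measure)
  have "distr (uniform_count_measure {1..M}) pbar f
     = measure_of (space pbar) (sets pbar) (emeasure (distr (uniform_count_measure {1..M}) pbar f))"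
    using measure_of_of_measure[of "distr (uniform_count_measure {1..M}) pbar f"] by simp
  also have "\<dots> = measure_of (space pbar) (sets pbar)
       (\<lambda>B. ennreal (real (card {i \<in> {1..M}. f i \<in> B}) / real M))"
  proof (rule measure_of_eq)
    show "sets pbar \<subseteq> Pow (space pbar)" by (rule sets.space_closed)
    fix a assume "a \<in> sigma_sets (space pbar) (sets pbar)"
    then have a: "a \<in> sets pbar" by (simp add: sets.sigma_sets_eq)
    have "emeasure (distr (uniform_count_measure {1..M}) pbar f) a
        = emeasure (uniform_count_measure {1..M}) (f -` a \<inter> {1..M})"
      using a fm by (simp add: emeasure_distr space_uniform_count_measure)
    also have "\<dots> = ennreal (real (card (f -` a \<inter> {1..M})) / real M)"
      by (subst emeasure_uniform_count_measure) auto
    also have "f -` a \<inter> {1..M} = {i \<in> {1..M}. f i \<in> a}" by auto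
    finally show "emeasure (distr (uniform_count_measure {1..M}) pbar f) a = 
       ennreal (real (card {i \<in> {1..M}. f i \<in> a}) / real M)" .
  qed
  finally show ?thesis unfolding empirical_measure_def by simp
qed

lemma emp_emeasure:
  assumes M: "M \<ge> 1" and f: "\<And>i. i \<in> {1..M} \<Longrightarrow> f i \<in> space pbar" and B: "B \<in> sets pbar"
  shows "emeasure (empirical_measure pbar M f) B = ennreal ((\<Sum>i\<in>{1..M}. indicator B (f i)) / real M)"
proof -
  have fm: "f \<in> measurable (uniform_count_measure {1..M}) pbar"
    using f by (auto simp: measurable_def space_uniform_count_measure sets_uniform_count_measure)
  have "emeasure (empirical_measure pbar M f) B = emeasure (uniform_count_measure {1..M}) (f -` B \<inter> {1..M})"
  proof -
    have e: "empirical_measure pbar M f = distr (uniform_count_measure {1..M}) pbar f"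
      by (rule emp_distr[OF M f])
    show ?thesis unfolding e emeasure_distr[OF fm B] space_uniform_count_measure ..
  qed
  also have "\<dots> = ennreal (real (card (f -` B \<inter> {1..M})) / real M)"
      by (subst emeasure_uniform_count_measure) auto
    also have "f -` B \<inter> {1..M} = {i \<in> {1..M}. f i \<in> B}" by auto
  also have "real (card {i \<in> {1..M}. f i \<in> B}) = (\<Sum>i\<in>{1..M}. indicator B (f i))"
    by (simp add: indicator_def sum.If_cases Int_def)
  finally show ?thesis .
qed

lemma emp_prob:
  assumes M: "M \<ge> 1" and f: "\<And>i. i \<in> {1..M} \<Longrightarrow> f i \<in> space pbar"
  shows "empirical_measure pbar M f \<in> space (prob_algebra pbar)"
proof -
  have fm: "f \<in> measurable (uniform_count_measure {1..M}) pbar"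
    using f by (auto simp: measurable_def space_uniform_count_measure sets_uniform_count_measure)
  have "prob_space (uniform_count_measure {1..M})"
    using M by (intro prob_space_uniform_count_measure) auto
  then show ?thesis using fm
  proof -
    have e: "empirical_measure pbar M f = distr (uniform_count_measure {1..M}) pbar f"
      by (rule emp_distr[OF M f])
    show ?thesis unfolding e using \<open>prob_space _\<close> fm
      by (simp add: space_prob_algebra prob_space.prob_space_distr)
  qed
qed

lemma card_sum_real: "finite I \<Longrightarrow> real (card {i \<in> I. P i}) = (\<Sum>i\<in>I. if P i then 1 else 0)"
  by (simp add: sum.If_cases Int_def)

lemma emp_meas:
  assumes M: "M \<ge> 1"
  shows "(\<lambda>f. empirical_measure pbar M f) \<in> measurable (PiM {1..M} (\<lambda>_. pbar)) (subprob_algebra pbar)"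
proof (rule measurable_subprob_algebra)
  fix f assume "f \<in> space (PiM {1..M} (\<lambda>_. pbar))"
  then have f: "\<And>i. i \<in> {1..M} \<Longrightarrow> f i \<in> space pbar" by (auto simp: space_PiM)
  from emp_prob[OF M f] show "subprob_space (empirical_measure pbar M f)"
    by (auto simp: space_prob_algebra intro: prob_space_imp_subprob_space)
  from emp_prob[OF M f] show "sets (empirical_measure pbar M f) = sets pbar"
    by (auto simp: space_prob_algebra)
next
  fix B assume B[measurable]: "B \<in> sets pbar"
  have "(\<lambda>f. ennreal ((\<Sum>i\<in>{1..M}. indicator B (f i)) / real M)) \<in> borel_measurable (PiM {1..M} (\<lambda>_. pbar))"
  proof (intro measurable_compose[OF _ measurable_ennreal] borel_measurable_divide borel_measurable_sum borel_measurable_const)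
    fix i assume i: "i \<in> {1..M}"
    show "(\<lambda>f. indicator B (f i) :: real) \<in> borel_measurable (PiM {1..M} (\<lambda>_. pbar))"
      by (intro measurable_compose[OF measurable_component_singleton[OF i]] borel_measurable_indicator B)
  qed
  then show "(\<lambda>f. emeasure (empirical_measure pbar M f) B) \<in> borel_measurable (PiM {1..M} (\<lambda>_. pbar))"
  proof (rule measurable_cong[THEN iffD1, rotated])
    fix f assume "f \<in> space (PiM {1..M} (\<lambda>_. pbar))"
    then have f: "\<And>i. i \<in> {1..M} \<Longrightarrow> f i \<in> space pbar" by (auto simp: space_PiM)
    show "ennreal ((\<Sum>i\<in>{1..M}. indicator B (f i)) / real M) = emeasure (empirical_measure pbar M f) B"
      by (rule emp_emeasure[OF M f B, symmetric])
  qed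
qed

lemma ecdf_meas:
  assumes r[measurable]: "r \<in> borel_measurable pbar" and M: "M \<ge> 1"
  shows "(\<lambda>f. empirical_cdf r M f (r (f 1))) \<in> borel_measurable (PiM {1..M} (\<lambda>_. pbar))"
proof -
  have "(\<lambda>f. (\<Sum>i\<in>{1..M}. if r (f i) \<le> r (f 1) then 1 else 0) / real M) \<in> borel_measurable (PiM {1..M} (\<lambda>_. pbar))"
  proof (intro borel_measurable_divide borel_measurable_sum borel_measurable_const)
    fix i assume i: "i \<in> {1..M}"
    have 1: "1 \<in> {1..M}" using M by auto
    have a: "(\<lambda>f. r (f i)) \<in> borel_measurable (PiM {1..M} (\<lambda>_. pbar))"
      by (intro measurable_compose[OF measurable_component_singleton[OF i]] r)
    have b: "(\<lambda>f. r (f 1)) \<in> borel_measurable (PiM {1..M} (\<lambda>_. pbar))"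
      by (intro measurable_compose[OF measurable_component_singleton[OF 1]] r)
    show "(\<lambda>f. if r (f i) \<le> r (f 1) then 1 else 0 :: real) \<in> borel_measurable (PiM {1..M} (\<lambda>_. pbar))"
      by (intro measurable_If borel_measurable_const borel_measurable_le a b)
  qed
  then show ?thesis
    unfolding empirical_cdf_def card_sum_real[OF finite_atLeastAtMost] .
qed

lemma ecdf_range: "M \<ge> 1 \<Longrightarrow> empirical_cdf r M f u \<in> {0..1}"
proof -
  assume M: "M \<ge> 1"
  have "card {i \<in> {1..M}. r (f i) \<le> u} \<le> card {1..M}" by (intro card_mono) auto
  then show ?thesis using M unfolding empirical_cdf_def by auto
qed

theorem lemma2:
  fixes P :: "'w measure" and pbar :: "'a measure"
    and r :: "'a \<Rightarrow> real" and M :: nat and \<alpha> :: real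
    and X :: "nat \<Rightarrow> 'w \<Rightarrow> 'a" and C :: "nat \<Rightarrow> 'w \<Rightarrow> bool"
    and A :: "real \<Rightarrow> real \<Rightarrow> 'a \<Rightarrow> 'a measure \<Rightarrow> real"
  assumes P: "prob_space P"
    and pbar: "prob_space pbar"
    and r_meas: "r \<in> borel_measurable pbar"
    and M: "M \<ge> 1"
    and alpha: "\<alpha> > 0"
    and X_meas: "\<And>i. i \<in> {1..M} \<Longrightarrow> X i \<in> measurable P pbar"
    and X_law: "\<And>i. i \<in> {1..M} \<Longrightarrow> distr P pbar (X i) = pbar"
    and X_indep: "prob_space.indep_vars P (\<lambda>_. pbar) X {1..M}"
    and A_meas: "(\<lambda>(u, t, x, \<mu>). A u t x \<mu>)
                   \<in> borel_measurable (borel \<Otimes>\<^sub>M borel \<Otimes>\<^sub>M pbar \<Otimes>\<^sub>M subprob_algebra pbar)"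
    and A_range: "\<And>u t x \<mu>. t \<in> {0..1} \<Longrightarrow> x \<in> space pbar \<Longrightarrow> \<mu> \<in> space (prob_algebra pbar)
                     \<Longrightarrow> 0 \<le> A u t x \<mu> \<and> A u t x \<mu> \<le> 1"
    and A_mono1: "\<And>u u' t x \<mu>. u \<le> u' \<Longrightarrow> t \<in> {0..1} \<Longrightarrow> x \<in> space pbar
                     \<Longrightarrow> \<mu> \<in> space (prob_algebra pbar) \<Longrightarrow> A u t x \<mu> \<le> A u' t x \<mu>"
    and A_mono2: "\<And>u t t' x \<mu>. t \<le> t' \<Longrightarrow> t \<in> {0..1} \<Longrightarrow> t' \<in> {0..1} \<Longrightarrow> x \<in> space pbar
                     \<Longrightarrow> \<mu> \<in> space (prob_algebra pbar) \<Longrightarrow> A u t x \<mu> \<le> A u t' x \<mu>"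
    and C_meas: "\<And>i. i \<in> {1..M} \<Longrightarrow> {w \<in> space P. C i w} \<in> sets P"
    and C_cond: "\<And>i B. i \<in> {1..M} \<Longrightarrow> B \<in> sets (PiM {1..M} (\<lambda>_. pbar)) \<Longrightarrow>
        measure P {w \<in> space P. C i w \<and> (\<lambda>j\<in>{1..M}. X j w) \<in> B}
        = (\<integral>w. indicator B (\<lambda>j\<in>{1..M}. X j w) *
              A (r (X i w)) (empirical_cdf r M (\<lambda>j. X j w) (r (X i w))) (X i w)
                (empirical_measure pbar M (\<lambda>j. X j w)) \<partial>P)"
    and accept_pos: "measure P {w \<in> space P. C 1 w} > 0"
  shows "\<forall>B \<in> sets pbar.
           cond_prob P (\<lambda>w. X 1 w \<in> B) (\<lambda>w. C 1 w)
           = (LINT x:B|pbar. accept_g pbar r M A x) / (\<integral>x. accept_g pbar r M A x \<partial>pbar)"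
proof -
  interpret P: prob_space P by (rule P)
  interpret pb: prob_space pbar by (rule pbar)
  note r_meas[measurable]
  have one: "1 \<in> {1..M}" using M by auto
  define N where "N = PiM {1..M} (\<lambda>_. pbar)"
  define F where "F f = A (r (f 1)) (empirical_cdf r M f (r (f 1))) (f 1) (empirical_measure pbar M f)" for f
  have T: "(\<lambda>f. (r (f 1), empirical_cdf r M f (r (f 1)), f 1, empirical_measure pbar M f))
      \<in> measurable N (borel \<Otimes>\<^sub>M borel \<Otimes>\<^sub>M pbar \<Otimes>\<^sub>M subprob_algebra pbar)"
    unfolding N_def
    by (intro measurable_Pair measurable_compose[OF measurable_component_singleton[OF one] r_meas]
        ecdf_meas[OF r_meas M] measurable_component_singleton[OF one] emp_meas[OF M])
  have F_meas: "F \<in> borel_measurable N"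
  proof -
    have "F = (\<lambda>f. A (r (f 1)) (empirical_cdf r M f (r (f 1))) (f 1) (empirical_measure pbar M f))"
      by (rule ext) (simp add: F_def)
    then show ?thesis using measurable_compose[OF T A_meas] by simp
  qed
  have F_bnd: "0 \<le> F f \<and> F f \<le> 1" if f: "f \<in> space N" for f
  proof -
    have fi: "\<And>i. i \<in> {1..M} \<Longrightarrow> f i \<in> space pbar" using f by (auto simp: N_def space_PiM)
    show ?thesis unfolding F_def
      by (rule A_range[OF ecdf_range[OF M] fi[OF one] emp_prob[OF M fi]])
  qed
  have F_restrict: "F (restrict f {1..M}) = F f" for f
  proof -
    have "empirical_cdf r M (restrict f {1..M}) = empirical_cdf r M f"
      unfolding empirical_cdf_def
      by (intro ext, rule arg_cong[where f="\<lambda>S. real (card S) / real M"]) auto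
    moreover have "empirical_measure pbar M (restrict f {1..M}) = empirical_measure pbar M f"
      unfolding empirical_measure_def
      by (intro arg_cong[where f="measure_of _ _"] ext, rule arg_cong[where f="\<lambda>S. ennreal (real (card S) / real M)"]) auto
    ultimately show ?thesis using one by (simp add: F_def)
  qed
  define R where "R w = (\<lambda>j\<in>{1..M}. X j w)" for w
  have R_meas: "R \<in> measurable P N"
    unfolding R_def N_def by (intro measurable_restrict X_meas)
  have joint: "distr P N R = N"
  proof -
    have "distr P N R = (\<Pi>\<^sub>M i\<in>{1..M}. distr P pbar (X i))"
      using P.indep_vars_iff_distr_eq_PiM'[of "{1..M}" X "\<lambda>_. pbar"] one X_meas X_indep
      unfolding R_def N_def by auto
    also have "\<dots> = N" unfolding N_def by (intro PiM_cong refl) (simp add: X_law)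
    finally show ?thesis .
  qed
  have key: "measure P {w \<in> space P. C 1 w \<and> R w \<in> B'} = (\<integral>f. indicator B' f * F f \<partial>N)"
    if B': "B' \<in> sets N" for B'
  proof -
    have "measure P {w \<in> space P. C 1 w \<and> R w \<in> B'} = (\<integral>w. indicator B' (R w) * F (R w) \<partial>P)"
    proof -
      have FR: "F (R w) = A (r (X 1 w)) (empirical_cdf r M (\<lambda>j. X j w) (r (X 1 w))) (X 1 w)
                (empirical_measure pbar M (\<lambda>j. X j w))" for w
        using F_restrict[of "\<lambda>j. X j w"] unfolding R_def by (simp add: F_def)
      show ?thesis unfolding FR using C_cond[OF one B'[unfolded N_def]] by (simp add: R_def)
    qed
    also have "\<dots> = (\<integral>f. indicator B' f * F f \<partial>distr P N R)"
      by (intro integral_distr[symmetric] R_meas borel_measurable_times borel_measurable_indicator B' F_meas)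
    finally show ?thesis by (simp add: joint)
  qed
  define Q where "Q = PiM {2..M} (\<lambda>_. pbar)"
  interpret Q: prob_space Q unfolding Q_def by (intro prob_space_PiM pbar)
  interpret PQ: pair_prob_space pbar Q by standard
  have ins: "insert 1 {2..M} = {1..M}" using M by auto
  define U where "U = (\<lambda>(x, Y). Y(1 := x) :: nat \<Rightarrow> 'a)"
  have U_meas: "U \<in> measurable (pbar \<Otimes>\<^sub>M Q) N"
  proof -
    have "(\<lambda>(f, y). f(1 := y)) \<in> measurable (Q \<Otimes>\<^sub>M pbar) N"
      using measurable_add_dim[of 1 "{2..M}" "\<lambda>_. pbar"] unfolding Q_def N_def ins .
    from measurable_compose[OF measurable_pair_swap'[of pbar Q] this] show ?thesis
      unfolding U_def by (simp add: case_prod_beta)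
  qed
  have NU: "distr (pbar \<Otimes>\<^sub>M Q) N U = N"
    using distr_pair_PiM_eq_PiM[of "{2..M}" "\<lambda>_. pbar" 1] pbar
    unfolding U_def N_def Q_def ins by simp
  have fub: "(\<integral>f. indicator {f \<in> space N. f 1 \<in> B} f * F f \<partial>N)
        = (\<integral>x. indicator B x * accept_g pbar r M A x \<partial>pbar)" if B: "B \<in> sets pbar" for B
  proof -
    define G where "G f = indicator {f \<in> space N. f 1 \<in> B} f * F f" for f
    have B1: "{f \<in> space N. f 1 \<in> B} \<in> sets N"
    proof -
      have "(\<lambda>f. f 1) -` B \<inter> space N \<in> sets N"
        unfolding N_def by (rule measurable_sets[OF measurable_component_singleton[OF one] B])
      also have "(\<lambda>f. f 1) -` B \<inter> space N = {f \<in> space N. f 1 \<in> B}" by auto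
      finally show ?thesis .
    qed
    have G_meas: "G \<in> borel_measurable N"
      unfolding G_def[abs_def] by (intro borel_measurable_times borel_measurable_indicator B1 F_meas)
    have G_bnd: "norm (G f) \<le> 1" if "f \<in> space N" for f
      using F_bnd[OF that] by (auto simp: G_def indicator_def)
    have "(\<integral>f. G f \<partial>N) = (\<integral>z. G (U z) \<partial>(pbar \<Otimes>\<^sub>M Q))"
      by (subst NU[symmetric]) (intro integral_distr U_meas G_meas)
    also have "\<dots> = (\<integral>x. (\<integral>Y. G (U (x, Y)) \<partial>Q) \<partial>pbar)"
    proof (rule PQ.integral_fst'[symmetric])
      show "integrable (pbar \<Otimes>\<^sub>M Q) (\<lambda>z. G (U z))"
        using measurable_space[OF U_meas] G_bnd
        by (intro PQ.P.integrable_const_bound[where B=1] AE_I2 measurable_compose[OF U_meas G_meas]) auto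
    qed
    also have "\<dots> = (\<integral>x. indicator B x * accept_g pbar r M A x \<partial>pbar)"
    proof (rule Bochner_Integration.integral_cong[OF refl])
      fix x assume x: "x \<in> space pbar"
      have "(\<integral>Y. G (U (x, Y)) \<partial>Q) = (\<integral>Y. indicator B x *
           (let xs = (\<lambda>j. if j = 1 then x else Y j) in
              A (r x) (empirical_cdf r M xs (r x)) x (empirical_measure pbar M xs)) \<partial>Q)"
      proof (rule Bochner_Integration.integral_cong[OF refl])
        fix Y assume Y: "Y \<in> space Q"
        have UN: "U (x, Y) \<in> space N"
          using measurable_space[OF U_meas, of "(x, Y)"] x Y by (simp add: space_pair_measure)
        have "U (x, Y) = (\<lambda>j. if j = 1 then x else Y j)" by (auto simp: U_def)
        then show "G (U (x, Y)) = indicator B x *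
           (let xs = (\<lambda>j. if j = 1 then x else Y j) in
              A (r x) (empirical_cdf r M xs (r x)) x (empirical_measure pbar M xs))"
          using UN by (simp add: G_def F_def indicator_def Let_def)
      qed
      also have "\<dots> = indicator B x * accept_g pbar r M A x"
        unfolding accept_g_def Q_def by simp
      finally show "(\<integral>Y. G (U (x, Y)) \<partial>Q) = indicator B x * accept_g pbar r M A x" .
    qed
    finally show ?thesis unfolding G_def .
  qed
  have Rsp: "R w \<in> space N" and R1: "R w 1 = X 1 w" if "w \<in> space P" for w
    using measurable_space[OF R_meas that] one by (auto simp: R_def)
  have sets_eq: "{w \<in> space P. P' (X 1 w) \<and> C 1 w} = {w \<in> space P. C 1 w \<and> R w \<in> {f \<in> space N. P' (f 1)}}" for P'
    using Rsp R1 by auto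
    have num: "measure P {w \<in> space P. X 1 w \<in> B \<and> C 1 w} = (\<integral>x. indicator B x * accept_g pbar r M A x \<partial>pbar)"
      if B: "B \<in> sets pbar" for B
    proof -
      have B1: "{f \<in> space N. f 1 \<in> B} \<in> sets N"
      proof -
        have "(\<lambda>f. f 1) -` B \<inter> space N \<in> sets N"
          unfolding N_def by (rule measurable_sets[OF measurable_component_singleton[OF one] B])
        also have "(\<lambda>f. f 1) -` B \<inter> space N = {f \<in> space N. f 1 \<in> B}" by auto
        finally show ?thesis .
      qed
      show ?thesis unfolding sets_eq[of "\<lambda>x. x \<in> B"] key[OF B1] fub[OF B] ..
    qed
  show ?thesis
  proof
    fix B assume B: "B \<in> sets pbar"
    have den: "measure P {w \<in> space P. C 1 w} = (\<integral>x. accept_g pbar r M A x \<partial>pbar)"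
    proof -
      have "{w \<in> space P. C 1 w} = {w \<in> space P. X 1 w \<in> space pbar \<and> C 1 w}"
        using measurable_space[OF X_meas[OF one]] by auto
      then have "measure P {w \<in> space P. C 1 w} = (\<integral>x. indicator (space pbar) x * accept_g pbar r M A x \<partial>pbar)"
        using num[OF sets.top] by simp
      also have "\<dots> = (\<integral>x. accept_g pbar r M A x \<partial>pbar)"
        by (rule Bochner_Integration.integral_cong[OF refl]) simp
      finally show ?thesis .
    qed
    show "cond_prob P (\<lambda>w. X 1 w \<in> B) (\<lambda>w. C 1 w)
           = (LINT x:B|pbar. accept_g pbar r M A x) / (\<integral>x. accept_g pbar r M A x \<partial>pbar)"
      unfolding cond_prob_def set_lebesgue_integral_def using num[OF B] den by simp
  qed
qed

end
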